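(* Consider the following iterative random process on populations (clades) of finite surreal forms, starting from an initial finite clade. Each new clade of size $n$ is produced from the previous clade $\mathcal{C}$ by creating each member independently as follows: draw $n_p\sim\mathrm{Poisson}(\lambda)$ with $\lambda>0$; select $n_p$ surreal forms from $\mathcal{C}$, each independently with probability proportional to $w_{g(x)}$; sort them into an ordered list $P$; choose a split point $s\in\{0,\dots,n_p\}$ from a split distribution $D_s(n_p)$; set $x=\{X_L\mid X_R\}$ with $X_L=\{P[1],\dots,P[s]\}$, $X_R=\{P[s+1],\dots,P[n_p]\}$. Here the weighting is $w_k=f_k/g_k$ whenever $g_k>0$ and $w_k=0$ whenever $g_k=0$, where $g_k$ is the proportion of members of the current clade $\mathcal{C}$ with generation $k$, and $f_k=\alpha^k$ with $\alpha\in(0,1)$. Then the long-term generation distribution of the clades has PMF $$\Pr[g(x)=k]=\begin{cases} e^{-\lambda}, & k=0,\\ e^{-\lambda\alpha^{k}}-e^{-\lambda\alpha^{k-1}}, & k\ge1,\end{cases}$$ equivalently CDF $\Pr[g(x)\le k]=e^{-\lambda\alpha^k}$.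
   Context: A (short) surreal form is $x=\{X_L\mid X_R\}$ where $X_L,X_R$ are finite (possibly empty) sets of previously constructed surreal forms such that no element of $X_R$ is $\le$ any element of $X_L$; the base form is $\bar 0=\{\emptyset\mid\emptyset\}$. The elements of $X_L\cup X_R$ are the parents of $x$. The generation is defined by $g(\bar 0)=0$ and $g(x)=1+\max_{p\in X_L\cup X_R} g(p)$.
   Formalization: Clades of size n are replaced by a deterministic iteration: the proportions $g_k$ of each new clade equal the law of a new member's generation given the previous clade's proportions, and the stated PMF is their pointwise limit. Apart from conventions, each condition added here is assumed in the paper as well or is needed for the statement above to hold. *)

theory Defs
  imports "HOL-Probability.Probability"
begin

text \<open>Generation-level model of the clade process (infinite-population / mean-field reading).
  A clade is represented by its generation distribution G (g_k = pmf G k).\<close>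

definition gen_weight :: "real \<Rightarrow> nat pmf \<Rightarrow> nat \<Rightarrow> real" where
  "gen_weight \<alpha> G k = (if pmf G k > 0 then \<alpha> ^ k / pmf G k else 0)"

text \<open>Law of the generation of one selected parent: a member is chosen with probability
  proportional to w of its generation, so generation k is chosen with probability
  proportional to w_k * g_k.\<close>
definition parent_gen_pmf :: "real \<Rightarrow> nat pmf \<Rightarrow> nat pmf" where
  "parent_gen_pmf \<alpha> G =
     embed_pmf (\<lambda>k. gen_weight \<alpha> G k * pmf G k / (\<Sum>\<^sub>\<infinity>j. gen_weight \<alpha> G j * pmf G j))"

text \<open>Generation of a newly created member: n_p ~ Poisson(lambda) parents drawn
  independently; g(x) = 0 if there are no parents, otherwise 1 + max parent generation
  (the split point and sorting do not affect the generation).\<close>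
definition new_member_gen :: "real \<Rightarrow> real \<Rightarrow> nat pmf \<Rightarrow> nat pmf" where
  "new_member_gen rate \<alpha> G =
     do { np \<leftarrow> poisson_pmf rate;
          ps \<leftarrow> replicate_pmf np (parent_gen_pmf \<alpha> G);
          return_pmf (if ps = [] then 0 else Suc (Max (set ps))) }"

definition clade_gen :: "real \<Rightarrow> real \<Rightarrow> nat pmf \<Rightarrow> nat \<Rightarrow> nat pmf" where
  "clade_gen rate \<alpha> G0 n = (new_member_gen rate \<alpha> ^^ n) G0"

definition limit_gen_pmf :: "real \<Rightarrow> real \<Rightarrow> nat \<Rightarrow> real" where
  "limit_gen_pmf rate \<alpha> k =
     (if k = 0 then exp (- rate) else exp (- rate * \<alpha> ^ k) - exp (- rate * \<alpha> ^ (k - 1)))"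

end

theory Submission
  imports Defs
begin

definition Zs :: "real \<Rightarrow> nat pmf \<Rightarrow> real" where
  "Zs \<alpha> G = (\<Sum>j\<in>set_pmf G. \<alpha> ^ j)"

lemma Zs_pos: assumes "finite (set_pmf G)" "0 < \<alpha>" shows "Zs \<alpha> G > 0"
  unfolding Zs_def using assms set_pmf_not_empty[of G]
  by (intro sum_pos) auto

lemma parent_pmf:
  assumes fin: "finite (set_pmf G)" and a: "0 < \<alpha>"
  shows "pmf (parent_gen_pmf \<alpha> G) k = (if k \<in> set_pmf G then \<alpha> ^ k / Zs \<alpha> G else 0)"
proof -
  have h: "gen_weight \<alpha> G j * pmf G j = (if j \<in> set_pmf G then \<alpha> ^ j else 0)" for j
    using pmf_nonneg[of G j] by (auto simp: gen_weight_def set_pmf_iff)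
  have "(\<Sum>\<^sub>\<infinity>j. gen_weight \<alpha> G j * pmf G j) = (\<Sum>\<^sub>\<infinity>j\<in>set_pmf G. \<alpha> ^ j)"
    unfolding h by (rule infsum_cong_neutral) auto
  also have "\<dots> = Zs \<alpha> G" using fin by (simp add: Zs_def)
  finally have Z: "(\<Sum>\<^sub>\<infinity>j. gen_weight \<alpha> G j * pmf G j) = Zs \<alpha> G" .
  have Zp: "Zs \<alpha> G > 0" using Zs_pos fin a by blast
  define f where "f k = (if k \<in> set_pmf G then \<alpha> ^ k / Zs \<alpha> G else 0)" for k
  have eq: "parent_gen_pmf \<alpha> G = embed_pmf f"
    unfolding parent_gen_pmf_def Z unfolding h f_def by (rule arg_cong[where f=embed_pmf]) auto
  have nn: "\<And>x. 0 \<le> f x" using a Zp by (auto simp: f_def)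
  have "(\<integral>\<^sup>+x. f x \<partial>count_space UNIV) = (\<Sum>x\<in>set_pmf G. ennreal (f x))"
    by (rule nn_integral_count_space'[OF fin]) (auto simp: f_def)
  also have "\<dots> = ennreal (\<Sum>x\<in>set_pmf G. f x)" using nn by (simp add: sum_ennreal)
  also have "(\<Sum>x\<in>set_pmf G. f x) = (\<Sum>x\<in>set_pmf G. \<alpha> ^ x) / Zs \<alpha> G"
    by (simp add: f_def sum_divide_distrib)
  also have "\<dots> = 1" using Zp by (simp add: Zs_def)
  finally have "(\<integral>\<^sup>+x. f x \<partial>count_space UNIV) = 1" by simp
  then show ?thesis unfolding eq using pmf_embed_pmf[of f, OF nn] f_def by auto
qed

lemma set_parent:
  assumes fin: "finite (set_pmf G)" and a: "0 < \<alpha>"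
  shows "set_pmf (parent_gen_pmf \<alpha> G) = set_pmf G"
  using parent_pmf[OF assms] Zs_pos[OF assms] a
  by (auto simp: set_pmf_iff)

lemma prob_bind_pmf:
  "measure_pmf.prob (bind_pmf M f) A = (\<integral>x. measure_pmf.prob (f x) A \<partial>measure_pmf M)"
  unfolding measure_pmf_bind
  by (rule measure_pmf.measure_bind[where N="count_space UNIV"]) (auto simp: measurable_measure_pmf measure_pmf_in_subprob_algebra)

lemma prob_replicate:
  "measure_pmf.prob (replicate_pmf n P) {ps. set ps \<subseteq> A} = measure_pmf.prob P A ^ n"
proof (induction n)
  case 0 then show ?case by simp
next
  case (Suc n)
  have "measure_pmf.prob (replicate_pmf (Suc n) P) {ps. set ps \<subseteq> A}
     = (\<integral>x. measure_pmf.prob (map_pmf ((#) x) (replicate_pmf n P)) {ps. set ps \<subseteq> A} \<partial>measure_pmf P)"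
    by (simp add: prob_bind_pmf map_pmf_def)
  also have "\<dots> = (\<integral>x. indicator A x * measure_pmf.prob P A ^ n \<partial>measure_pmf P)"
  proof (intro Bochner_Integration.integral_cong refl)
    fix x
    have "((#) x) -` {ps. set ps \<subseteq> A} = (if x \<in> A then {ps. set ps \<subseteq> A} else {})" by auto
    then show "measure_pmf.prob (map_pmf ((#) x) (replicate_pmf n P)) {ps. set ps \<subseteq> A} = indicator A x * measure_pmf.prob P A ^ n"
      using Suc by (simp add: indicator_def)
  qed
  also have "\<dots> = measure_pmf.prob P A ^ Suc n"
    by simp
  finally show ?case .
qed

lemma poisson_power:
  fixes x rate :: real assumes r: "0 < rate"
  shows "(\<integral>n. x ^ n \<partial>measure_pmf (poisson_pmf rate)) = exp (- rate * (1 - x))"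
proof -
  have eqf: "pmf (poisson_pmf rate) n * y ^ n = exp (- rate) * ((rate * y) ^ n /\<^sub>R fact n)" for n and y :: real
    using r by (simp add: power_mult_distrib divide_inverse)
  have s: "(\<lambda>n. pmf (poisson_pmf rate) n * y ^ n) sums (exp (- rate) * exp (rate * y))" for y :: real
    unfolding eqf by (intro sums_mult exp_converges)
  have int: "integrable (count_space UNIV) (\<lambda>n. pmf (poisson_pmf rate) n * x ^ n)"
    unfolding integrable_count_space_nat_iff
    using s[of "\<bar>x\<bar>"] by (simp add: abs_mult power_abs sums_summable)
  have "(\<integral>n. x ^ n \<partial>measure_pmf (poisson_pmf rate)) = (\<integral>n. pmf (poisson_pmf rate) n * x ^ n \<partial>count_space UNIV)"
    unfolding measure_pmf_eq_density by (subst integral_density) auto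
  also have "\<dots> = (\<Sum>n. pmf (poisson_pmf rate) n * x ^ n)"
    by (rule integral_count_space_nat[OF int])
  also have "\<dots> = exp (- rate) * exp (rate * x)" using s[of x] by (simp add: sums_iff)
  also have "\<dots> = exp (- rate * (1 - x))" by (subst mult_exp_exp) (simp add: algebra_simps)
  finally show ?thesis .
qed

definition gfun :: "nat list \<Rightarrow> nat" where
  "gfun ps = (if ps = [] then 0 else Suc (Max (set ps)))"

lemma new_eq: "new_member_gen rate \<alpha> G = bind_pmf (poisson_pmf rate) (\<lambda>np. map_pmf gfun (replicate_pmf np (parent_gen_pmf \<alpha> G)))"
  unfolding new_member_gen_def map_pmf_def gfun_def by simp

lemma gfun_pre0: "gfun -` {..0} = {ps. set ps \<subseteq> {}}"
  by (auto simp: gfun_def split: if_splits)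

lemma gfun_preS: "gfun -` {..Suc k} = {ps. set ps \<subseteq> {..k}}"
  by (auto simp: gfun_def Max_le_iff split: if_splits)

lemma new_cdf0:
  assumes r: "0 < rate"
  shows "measure_pmf.prob (new_member_gen rate \<alpha> G) {..0} = exp (- rate)"
  unfolding new_eq prob_bind_pmf measure_map_pmf gfun_pre0 prob_replicate
  apply (subst poisson_power[OF r])
  apply simp
  done

lemma new_cdfS:
  assumes r: "0 < rate"
  shows "measure_pmf.prob (new_member_gen rate \<alpha> G) {..Suc k}
     = exp (- rate * (1 - measure_pmf.prob (parent_gen_pmf \<alpha> G) {..k}))"
  unfolding new_eq prob_bind_pmf measure_map_pmf gfun_preS prob_replicate
  apply (subst poisson_power[OF r])
  apply simp
  done

lemma set_new:
  assumes r: "0 < rate"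
  shows "set_pmf (new_member_gen rate \<alpha> G) = insert 0 (Suc ` set_pmf (parent_gen_pmf \<alpha> G))"
proof -
  let ?P = "parent_gen_pmf \<alpha> G"
  have "set_pmf (new_member_gen rate \<alpha> G) = (\<Union>np. gfun ` {xs\<in>lists (set_pmf ?P). length xs = np})"
    unfolding new_eq using r by (simp add: set_replicate_pmf)
  also have "\<dots> = insert 0 (Suc ` set_pmf ?P)"
  proof (intro equalityI subsetI)
    fix y assume "y \<in> (\<Union>np. gfun ` {xs\<in>lists (set_pmf ?P). length xs = np})"
    then obtain xs where xs: "xs \<in> lists (set_pmf ?P)" "y = gfun xs" by auto
    show "y \<in> insert 0 (Suc ` set_pmf ?P)"
    proof (cases "xs = []")
      case True then show ?thesis using xs by (simp add: gfun_def)
    next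
      case False
      then have "Max (set xs) \<in> set xs" by simp
      then have "Max (set xs) \<in> set_pmf ?P" using xs(1) by (auto simp: lists_eq_set)
      then show ?thesis using xs(2) False by (simp add: gfun_def)
    qed
  next
    fix y assume "y \<in> insert 0 (Suc ` set_pmf ?P)"
    then consider "y = 0" | z where "z \<in> set_pmf ?P" "y = Suc z" by auto
    then show "y \<in> (\<Union>np. gfun ` {xs\<in>lists (set_pmf ?P). length xs = np})"
    proof cases
      case 1
      then have "y = gfun []" by (simp add: gfun_def)
      moreover have "[] \<in> {xs\<in>lists (set_pmf ?P). length xs = 0}" by simp
      ultimately show ?thesis by (intro UN_I[OF UNIV_I] image_eqI)
    next
      case 2
      then have "y = gfun [z]" by (simp add: gfun_def)
      moreover have "[z] \<in> {xs\<in>lists (set_pmf ?P). length xs = 1}" using 2 by simp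
      ultimately show ?thesis by (intro UN_I[OF UNIV_I] image_eqI)
    qed
  qed
  finally show ?thesis .
qed

lemma pmf_from_cdf:
  "pmf M (Suc m) = measure_pmf.prob M {..Suc m} - measure_pmf.prob M {..m}"
proof -
  have "{..Suc m} = insert (Suc m) {..m}" by auto
  then show ?thesis by (simp add: measure_measure_pmf_finite)
qed

lemma pmf_0_cdf: "pmf (M::nat pmf) 0 = measure_pmf.prob M {..0}"
proof -
  have "{..0::nat} = {0}" by auto
  then show ?thesis by (subst \<open>{..0::nat} = {0}\<close>) (rule measure_pmf_single[symmetric])
qed

context
  fixes rate \<alpha> :: real and G0 :: "nat pmf"
  assumes r: "rate > 0" and a0: "0 < \<alpha>" and a1: "\<alpha> < 1"
    and fin0: "finite (set_pmf G0)"
begin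

abbreviation "C n \<equiv> clade_gen rate \<alpha> G0 n"

lemma C_Suc: "C (Suc n) = new_member_gen rate \<alpha> (C n)"
  by (simp add: clade_gen_def)

lemma C_fin: "finite (set_pmf (C n))"
proof (induction n)
  case 0 then show ?case using fin0 by (simp add: clade_gen_def)
next
  case (Suc n) then show ?case
    unfolding C_Suc set_new[OF r] set_parent[OF Suc a0] by simp
qed

lemma C_sub: "{..<n} \<subseteq> set_pmf (C n)"
proof (induction n)
  case 0 then show ?case by simp
next
  case (Suc n)
  have "{..<Suc n} \<subseteq> insert 0 (Suc ` {..<n})"
  proof
    fix x assume "x \<in> {..<Suc n}" then show "x \<in> insert 0 (Suc ` {..<n})"
      by (cases x) auto
  qed
  also have "\<dots> \<subseteq> insert 0 (Suc ` set_pmf (C n))" using Suc by auto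
  finally show ?case
    unfolding C_Suc set_new[OF r] set_parent[OF C_fin a0] .
qed

lemma Z_lim: "(\<lambda>n. Zs \<alpha> (C n)) \<longlonglongrightarrow> 1 / (1 - \<alpha>)"
proof (rule tendsto_sandwich[of "\<lambda>n. \<Sum>j<n. \<alpha> ^ j" _ _ "\<lambda>n. 1 / (1 - \<alpha>)"])
  show "\<forall>\<^sub>F n in sequentially. (\<Sum>j<n. \<alpha> ^ j) \<le> Zs \<alpha> (C n)"
    unfolding Zs_def using C_sub C_fin a0
    by (intro always_eventually allI sum_mono2) auto
  have sm: "summable (\<lambda>j. \<alpha> ^ j)" using a0 a1 by (intro summable_geometric) auto
  show "\<forall>\<^sub>F n in sequentially. Zs \<alpha> (C n) \<le> 1 / (1 - \<alpha>)"
  proof (intro always_eventually allI)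
    fix n
    have "Zs \<alpha> (C n) \<le> (\<Sum>j. \<alpha> ^ j)"
      unfolding Zs_def using C_fin a0 by (intro sum_le_suminf[OF sm]) auto
    also have "\<dots> = 1 / (1 - \<alpha>)" using a0 a1 by (intro suminf_geometric) auto
    finally show "Zs \<alpha> (C n) \<le> 1 / (1 - \<alpha>)" .
  qed
  show "(\<lambda>n. \<Sum>j<n. \<alpha> ^ j) \<longlonglongrightarrow> 1 / (1 - \<alpha>)"
    using geometric_sums[of \<alpha>] a0 a1 by (simp add: sums_def)
qed simp

lemma F_eq:
  assumes "k < n"
  shows "measure_pmf.prob (parent_gen_pmf \<alpha> (C n)) {..k} = (\<Sum>j\<le>k. \<alpha> ^ j) / Zs \<alpha> (C n)"
proof -
  have "{..k} \<subseteq> set_pmf (C n)" using C_sub[of n] assms by auto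
  then show ?thesis
    by (simp add: measure_measure_pmf_finite parent_pmf[OF C_fin a0] sum_divide_distrib subset_iff)
qed

lemma F_lim: "(\<lambda>n. 1 - measure_pmf.prob (parent_gen_pmf \<alpha> (C n)) {..k}) \<longlonglongrightarrow> \<alpha> ^ Suc k"
proof -
  have ev: "\<forall>\<^sub>F n in sequentially. 1 - (\<Sum>j\<le>k. \<alpha> ^ j) / Zs \<alpha> (C n) = 1 - measure_pmf.prob (parent_gen_pmf \<alpha> (C n)) {..k}"
    using eventually_gt_at_top[of k] by eventually_elim (simp add: F_eq)
  have "(\<lambda>n. 1 - (\<Sum>j\<le>k. \<alpha> ^ j) / Zs \<alpha> (C n)) \<longlonglongrightarrow> 1 - (\<Sum>j\<le>k. \<alpha> ^ j) / (1 / (1 - \<alpha>))"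
    using a1 by (intro tendsto_intros Z_lim) auto
  moreover have "1 - (\<Sum>j\<le>k. \<alpha> ^ j) / (1 / (1 - \<alpha>)) = \<alpha> ^ Suc k"
  proof -
    have "(\<Sum>j\<le>k. \<alpha> ^ j) = (\<Sum>j<Suc k. \<alpha> ^ j)" by (simp add: lessThan_Suc_atMost)
    also have "\<dots> = (\<alpha> ^ Suc k - 1) / (\<alpha> - 1)" using a1 by (intro geometric_sum) auto
    finally show ?thesis using a1 by (simp add: field_simps)
  qed
  ultimately show ?thesis using Lim_transform_eventually[OF _ ev] by simp
qed

lemma cdf_lim: "(\<lambda>n. measure_pmf.prob (C (Suc n)) {..m}) \<longlonglongrightarrow> exp (- rate * \<alpha> ^ m)"
proof (cases m)
  case 0 then show ?thesis unfolding 0 C_Suc new_cdf0[OF r] by simp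
next
  case (Suc k)
  show ?thesis unfolding C_Suc Suc new_cdfS[OF r]
    by (intro tendsto_intros F_lim)
qed

lemma main: "(\<lambda>n. pmf (C n) k) \<longlonglongrightarrow> limit_gen_pmf rate \<alpha> k"
proof -
  have "(\<lambda>n. pmf (C (Suc n)) k) \<longlonglongrightarrow> limit_gen_pmf rate \<alpha> k"
  proof (cases k)
    case 0 then show ?thesis
      unfolding 0 pmf_0_cdf using cdf_lim[of 0] by (simp add: limit_gen_pmf_def)
  next
    case (Suc m)
    have "(\<lambda>n. measure_pmf.prob (C (Suc n)) {..Suc m} - measure_pmf.prob (C (Suc n)) {..m})
       \<longlonglongrightarrow> exp (- rate * \<alpha> ^ Suc m) - exp (- rate * \<alpha> ^ m)"
      by (intro tendsto_diff cdf_lim)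
    then show ?thesis unfolding Suc pmf_from_cdf limit_gen_pmf_def by simp
  qed
  then show ?thesis by (rule LIMSEQ_imp_Suc)
qed

end

theorem theorem2:
  fixes rate \<alpha> :: real and G0 :: "nat pmf"
  assumes "rate > 0" and "0 < \<alpha>" and "\<alpha> < 1"
    and "finite (set_pmf G0)"
  shows "\<forall>k. (\<lambda>n. pmf (clade_gen rate \<alpha> G0 n) k) \<longlonglongrightarrow> limit_gen_pmf rate \<alpha> k"
  using main[OF assms] by blast

end
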